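(* Let $\mathcal{T}$ be a $\operatorname{Hom}$-finite Krull–Schmidt triangulated category over an algebraically closed field and $\mathcal{D}$, $\mathcal{X}$, $\mathcal{Y}$ subcategories of $\mathcal{T}$. Then $(\mathcal{X},\mathcal{Y})$ is a $\mathcal{D}$-mutation pair if and only if it is a $[\mathcal{D}]$-mutation pair.
   Context: Subcategories are full and closed under isomorphisms, finite direct sums and direct summands. $[\mathcal{D}]$ is the ideal of morphisms factoring through an object of $\mathcal{D}$. For an ideal $\mathcal{I}$, $\operatorname{Ob}(\mathcal{I})$ is the subcategory of $X$ with $\mathrm{id}_X\in\mathcal{I}$; a left $\mathcal{I}$-approximation of $X$ is a morphism in $\mathcal{I}$ starting at $X$ through which every morphism of $\mathcal{I}$ starting at $X$ factors, and right approximations are dual. A left $\mathcal{D}$-approximation of $X$ is $f:X\to M$ with $M\in\mathcal{D}$ such that every morphism $X\to D$ with $D\in\mathcal{D}$ factors through $f$; right dually. $(\mathcal{X},\mathcal{Y})$ is a $\mathcal{D}$-mutation pair if $\mathcal{D}\subseteq\mathcal{X}\cap\mathcal{Y}$, each $X\in\mathcal{X}$ admits a triangle $X\xrightarrow{f}M\xrightarrow{g}Y\to X[1]$ with $Y\in\mathcal{Y}$, $f$ a left $\mathcal{D}$-approximation, $g$ a right $\mathcal{D}$-approximation, and each $Y\in\mathcal{Y}$ admits a triangle $X\xrightarrow{u}N\xrightarrow{v}Y\to X[1]$ with $X\in\mathcal{X}$, $v$ a right and $u$ a left $\mathcal{D}$-approximation. $(\mathcal{X},\mathcal{Y})$ is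 an $\mathcal{I}$-mutation pair if the same holds with $\operatorname{Ob}(\mathcal{I})\subseteq\mathcal{X}\cap\mathcal{Y}$ and left/right $\mathcal{I}$-approximations in place of $\mathcal{D}$-approximations. *)

theory Defs
  imports "HOL-Computational_Algebra.Polynomial"
begin

text \<open>Objects of type 'o, morphisms of type 'm (each morphism carries its domain and codomain),
  scalars of type 'k. tcomp C g f is the composite g after f. ttri C is the class of
  distinguished triangles, a triple (f,g,h) standing for X -f-> Y -g-> Z -h-> X[1].\<close>

record ('o, 'm, 'k) tcat =
  tobj :: "'o set"
  tmor :: "'m set"
  tdom :: "'m \<Rightarrow> 'o"
  tcod :: "'m \<Rightarrow> 'o"
  tcomp :: "'m \<Rightarrow> 'm \<Rightarrow> 'm"
  tid :: "'o \<Rightarrow> 'm"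
  tadd :: "'m \<Rightarrow> 'm \<Rightarrow> 'm"
  tsmul :: "'k \<Rightarrow> 'm \<Rightarrow> 'm"
  tzero :: "'o \<Rightarrow> 'o \<Rightarrow> 'm"
  tshO :: "'o \<Rightarrow> 'o"
  tshM :: "'m \<Rightarrow> 'm"
  ttri :: "('m \<times> 'm \<times> 'm) set"

definition hom :: "('o, 'm, 'k) tcat \<Rightarrow> 'o \<Rightarrow> 'o \<Rightarrow> 'm set" where
  "hom C X Y = {f \<in> tmor C. tdom C f = X \<and> tcod C f = Y}"

definition category :: "('o, 'm, 'k) tcat \<Rightarrow> bool" where
  "category C \<longleftrightarrow>
    (\<forall>f\<in>tmor C. tdom C f \<in> tobj C \<and> tcod C f \<in> tobj C) \<and>
    (\<forall>X\<in>tobj C. tid C X \<in> hom C X X) \<and>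
    (\<forall>X\<in>tobj C. \<forall>Y\<in>tobj C. \<forall>Z\<in>tobj C. \<forall>f\<in>hom C X Y. \<forall>g\<in>hom C Y Z.
       tcomp C g f \<in> hom C X Z) \<and>
    (\<forall>W\<in>tobj C. \<forall>X\<in>tobj C. \<forall>Y\<in>tobj C. \<forall>Z\<in>tobj C.
       \<forall>f\<in>hom C W X. \<forall>g\<in>hom C X Y. \<forall>h\<in>hom C Y Z.
       tcomp C h (tcomp C g f) = tcomp C (tcomp C h g) f) \<and>
    (\<forall>f\<in>tmor C. tcomp C (tid C (tcod C f)) f = f \<and> tcomp C f (tid C (tdom C f)) = f)"

definition linear_category :: "('o, 'm, 'k::field) tcat \<Rightarrow> bool" where
  "linear_category C \<longleftrightarrow> category C \<and>
    (\<forall>X\<in>tobj C. \<forall>Y\<in>tobj C.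
      tzero C X Y \<in> hom C X Y \<and>
      (\<forall>f\<in>hom C X Y. \<forall>g\<in>hom C X Y. tadd C f g \<in> hom C X Y) \<and>
      (\<forall>a. \<forall>f\<in>hom C X Y. tsmul C a f \<in> hom C X Y) \<and>
      (\<forall>f\<in>hom C X Y. \<forall>g\<in>hom C X Y. \<forall>h\<in>hom C X Y.
         tadd C (tadd C f g) h = tadd C f (tadd C g h)) \<and>
      (\<forall>f\<in>hom C X Y. \<forall>g\<in>hom C X Y. tadd C f g = tadd C g f) \<and>
      (\<forall>f\<in>hom C X Y. tadd C f (tzero C X Y) = f) \<and>
      (\<forall>f\<in>hom C X Y. \<exists>g\<in>hom C X Y. tadd C f g = tzero C X Y) \<and>
      (\<forall>a. \<forall>f\<in>hom C X Y. \<forall>g\<in>hom C X Y.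
         tsmul C a (tadd C f g) = tadd C (tsmul C a f) (tsmul C a g)) \<and>
      (\<forall>a b. \<forall>f\<in>hom C X Y. tsmul C (a + b) f = tadd C (tsmul C a f) (tsmul C b f)) \<and>
      (\<forall>a b. \<forall>f\<in>hom C X Y. tsmul C a (tsmul C b f) = tsmul C (a * b) f) \<and>
      (\<forall>f\<in>hom C X Y. tsmul C 1 f = f)) \<and>
    (\<forall>X\<in>tobj C. \<forall>Y\<in>tobj C. \<forall>Z\<in>tobj C.
      \<forall>f\<in>hom C X Y. \<forall>f'\<in>hom C X Y. \<forall>g\<in>hom C Y Z. \<forall>g'\<in>hom C Y Z. \<forall>a.
        tcomp C (tadd C g g') f = tadd C (tcomp C g f) (tcomp C g' f) \<and>
        tcomp C g (tadd C f f') = tadd C (tcomp C g f) (tcomp C g f') \<and>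
        tcomp C (tsmul C a g) f = tsmul C a (tcomp C g f) \<and>
        tcomp C g (tsmul C a f) = tsmul C a (tcomp C g f))"

fun lincomb :: "('o, 'm, 'k) tcat \<Rightarrow> 'o \<Rightarrow> 'o \<Rightarrow> ('k \<times> 'm) list \<Rightarrow> 'm" where
  "lincomb C X Y [] = tzero C X Y"
| "lincomb C X Y ((c, b) # xs) = tadd C (tsmul C c b) (lincomb C X Y xs)"

definition hom_finite :: "('o, 'm, 'k::field) tcat \<Rightarrow> bool" where
  "hom_finite C \<longleftrightarrow> linear_category C \<and>
    (\<forall>X\<in>tobj C. \<forall>Y\<in>tobj C. \<exists>B. set B \<subseteq> hom C X Y \<and>
       (\<forall>f\<in>hom C X Y. \<exists>cs. length cs = length B \<and> f = lincomb C X Y (zip cs B)))"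

definition neg :: "('o, 'm, 'k::ring_1) tcat \<Rightarrow> 'm \<Rightarrow> 'm" where
  "neg C f = tsmul C (-1) f"

definition iso :: "('o, 'm, 'k) tcat \<Rightarrow> 'm \<Rightarrow> bool" where
  "iso C f \<longleftrightarrow> f \<in> tmor C \<and> (\<exists>g\<in>hom C (tcod C f) (tdom C f).
     tcomp C g f = tid C (tdom C f) \<and> tcomp C f g = tid C (tcod C f))"

definition isomorphic :: "('o, 'm, 'k) tcat \<Rightarrow> 'o \<Rightarrow> 'o \<Rightarrow> bool" where
  "isomorphic C X Y \<longleftrightarrow> (\<exists>f\<in>hom C X Y. iso C f)"

definition is_zero_obj :: "('o, 'm, 'k) tcat \<Rightarrow> 'o \<Rightarrow> bool" where
  "is_zero_obj C Z \<longleftrightarrow> Z \<in> tobj C \<and> tid C Z = tzero C Z Z"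

definition biproduct :: "('o, 'm, 'k) tcat \<Rightarrow> 'o \<Rightarrow> 'o \<Rightarrow> 'o \<Rightarrow> bool" where
  "biproduct C S X1 X2 \<longleftrightarrow> S \<in> tobj C \<and> X1 \<in> tobj C \<and> X2 \<in> tobj C \<and>
    (\<exists>i1\<in>hom C X1 S. \<exists>i2\<in>hom C X2 S. \<exists>p1\<in>hom C S X1. \<exists>p2\<in>hom C S X2.
      tcomp C p1 i1 = tid C X1 \<and> tcomp C p2 i2 = tid C X2 \<and>
      tcomp C p1 i2 = tzero C X2 X1 \<and> tcomp C p2 i1 = tzero C X1 X2 \<and>
      tadd C (tcomp C i1 p1) (tcomp C i2 p2) = tid C S)"

definition additive_category :: "('o, 'm, 'k::field) tcat \<Rightarrow> bool" where
  "additive_category C \<longleftrightarrow> linear_category C \<and>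
    (\<exists>Z. is_zero_obj C Z) \<and>
    (\<forall>X1\<in>tobj C. \<forall>X2\<in>tobj C. \<exists>S. biproduct C S X1 X2)"

definition local_end :: "('o, 'm, 'k::ring_1) tcat \<Rightarrow> 'o \<Rightarrow> bool" where
  "local_end C X \<longleftrightarrow> X \<in> tobj C \<and> \<not> is_zero_obj C X \<and>
    (\<forall>f\<in>hom C X X. iso C f \<or> iso C (tadd C (tid C X) (neg C f)))"

inductive ks_sum :: "('o, 'm, 'k::ring_1) tcat \<Rightarrow> 'o \<Rightarrow> bool" for C where
  ks_zero: "is_zero_obj C Z \<Longrightarrow> ks_sum C Z"
| ks_step: "local_end C X1 \<Longrightarrow> ks_sum C X2 \<Longrightarrow> biproduct C S X1 X2 \<Longrightarrow> ks_sum C S"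

definition krull_schmidt :: "('o, 'm, 'k::field) tcat \<Rightarrow> bool" where
  "krull_schmidt C \<longleftrightarrow> additive_category C \<and> (\<forall>X\<in>tobj C. ks_sum C X)"

definition tri_shape :: "('o, 'm, 'k) tcat \<Rightarrow> 'm \<times> 'm \<times> 'm \<Rightarrow> bool" where
  "tri_shape C t = (case t of (f, g, h) \<Rightarrow>
     f \<in> tmor C \<and> g \<in> tmor C \<and> h \<in> tmor C \<and>
     tdom C g = tcod C f \<and> tdom C h = tcod C g \<and> tcod C h = tshO C (tdom C f))"

definition shift_ok :: "('o, 'm, 'k) tcat \<Rightarrow> bool" where
  "shift_ok C \<longleftrightarrow>
    (\<forall>X\<in>tobj C. tshO C X \<in> tobj C) \<and>
    (\<forall>X\<in>tobj C. \<forall>Y\<in>tobj C. bij_betw (tshM C) (hom C X Y) (hom C (tshO C X) (tshO C Y))) \<and>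
    (\<forall>X\<in>tobj C. tshM C (tid C X) = tid C (tshO C X)) \<and>
    (\<forall>X\<in>tobj C. \<forall>Y\<in>tobj C. \<forall>Z\<in>tobj C. \<forall>f\<in>hom C X Y. \<forall>g\<in>hom C Y Z.
       tshM C (tcomp C g f) = tcomp C (tshM C g) (tshM C f)) \<and>
    (\<forall>X\<in>tobj C. \<forall>Y\<in>tobj C. \<forall>f\<in>hom C X Y. \<forall>g\<in>hom C X Y. \<forall>a.
       tshM C (tadd C f g) = tadd C (tshM C f) (tshM C g) \<and>
       tshM C (tsmul C a f) = tsmul C a (tshM C f)) \<and>
    (\<forall>Y\<in>tobj C. \<exists>X\<in>tobj C. isomorphic C (tshO C X) Y)"

definition triangulated :: "('o, 'm, 'k::field) tcat \<Rightarrow> bool" where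
  "triangulated C \<longleftrightarrow> additive_category C \<and> shift_ok C \<and>
    (\<forall>t\<in>ttri C. tri_shape C t) \<and>
    \<comment> \<open>TR1: closure under isomorphisms of triangles\<close>
    (\<forall>f g h f' g' h' a b c. (f, g, h) \<in> ttri C \<and> tri_shape C (f', g', h') \<and>
       a \<in> hom C (tdom C f) (tdom C f') \<and> b \<in> hom C (tcod C f) (tcod C f') \<and>
       c \<in> hom C (tcod C g) (tcod C g') \<and> iso C a \<and> iso C b \<and> iso C c \<and>
       tcomp C b f = tcomp C f' a \<and> tcomp C c g = tcomp C g' b \<and>
       tcomp C (tshM C a) h = tcomp C h' c \<longrightarrow> (f', g', h') \<in> ttri C) \<and>
    \<comment> \<open>TR1: identity triangles\<close>
    (\<forall>X\<in>tobj C. \<forall>Z. is_zero_obj C Z \<longrightarrow>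
       (tid C X, tzero C X Z, tzero C Z (tshO C X)) \<in> ttri C) \<and>
    \<comment> \<open>TR1: every morphism embeds in a triangle\<close>
    (\<forall>f\<in>tmor C. \<exists>g h. (f, g, h) \<in> ttri C) \<and>
    \<comment> \<open>TR2: rotation\<close>
    (\<forall>f g h. tri_shape C (f, g, h) \<longrightarrow>
       ((f, g, h) \<in> ttri C \<longleftrightarrow> (g, h, neg C (tshM C f)) \<in> ttri C)) \<and>
    \<comment> \<open>TR3: morphisms of triangles\<close>
    (\<forall>f g h f' g' h' a b. (f, g, h) \<in> ttri C \<and> (f', g', h') \<in> ttri C \<and>
       a \<in> hom C (tdom C f) (tdom C f') \<and> b \<in> hom C (tcod C f) (tcod C f') \<and>
       tcomp C b f = tcomp C f' a \<longrightarrow>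
       (\<exists>c\<in>hom C (tcod C g) (tcod C g').
          tcomp C c g = tcomp C g' b \<and> tcomp C (tshM C a) h = tcomp C h' c)) \<and>
    \<comment> \<open>TR4: octahedral axiom\<close>
    (\<forall>f g u v j k l m. f \<in> tmor C \<and> g \<in> tmor C \<and> tdom C g = tcod C f \<and>
       (f, u, v) \<in> ttri C \<and> (g, j, k) \<in> ttri C \<and> (tcomp C g f, l, m) \<in> ttri C \<longrightarrow>
       (\<exists>p\<in>hom C (tcod C u) (tcod C l). \<exists>q\<in>hom C (tcod C l) (tcod C j).
          (p, q, tcomp C (tshM C u) k) \<in> ttri C \<and>
          tcomp C p u = tcomp C l g \<and> tcomp C m p = v \<and>
          tcomp C q l = j \<and> tcomp C k q = tcomp C (tshM C f) m))"

definition alg_closed :: "'k::field itself \<Rightarrow> bool" where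
  "alg_closed _ \<longleftrightarrow> (\<forall>p :: 'k poly. degree p \<noteq> 0 \<longrightarrow> (\<exists>x. poly p x = 0))"

text \<open>Subcategory: full (given by a set of objects), closed under isomorphisms,
  finite direct sums and direct summands.\<close>
definition subcat :: "('o, 'm, 'k) tcat \<Rightarrow> 'o set \<Rightarrow> bool" where
  "subcat C D \<longleftrightarrow> D \<subseteq> tobj C \<and>
    (\<forall>X\<in>D. \<forall>Y. isomorphic C X Y \<longrightarrow> Y \<in> D) \<and>
    (\<forall>Z. is_zero_obj C Z \<longrightarrow> Z \<in> D) \<and>
    (\<forall>S X1 X2. biproduct C S X1 X2 \<and> X1 \<in> D \<and> X2 \<in> D \<longrightarrow> S \<in> D) \<and>
    (\<forall>S X1 X2. biproduct C S X1 X2 \<and> S \<in> D \<longrightarrow> X1 \<in> D \<and> X2 \<in> D)"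

definition factor_ideal :: "('o, 'm, 'k) tcat \<Rightarrow> 'o set \<Rightarrow> 'm set" where
  "factor_ideal C D = {f \<in> tmor C. \<exists>W\<in>D. \<exists>a\<in>hom C (tdom C f) W. \<exists>b\<in>hom C W (tcod C f).
      f = tcomp C b a}"

definition ObI :: "('o, 'm, 'k) tcat \<Rightarrow> 'm set \<Rightarrow> 'o set" where
  "ObI C I = {X \<in> tobj C. tid C X \<in> I}"

definition left_I_approx :: "('o, 'm, 'k) tcat \<Rightarrow> 'm set \<Rightarrow> 'o \<Rightarrow> 'm \<Rightarrow> bool" where
  "left_I_approx C I X f \<longleftrightarrow> f \<in> I \<and> tdom C f = X \<and>
    (\<forall>g\<in>I. tdom C g = X \<longrightarrow> (\<exists>h\<in>hom C (tcod C f) (tcod C g). g = tcomp C h f))"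

definition right_I_approx :: "('o, 'm, 'k) tcat \<Rightarrow> 'm set \<Rightarrow> 'o \<Rightarrow> 'm \<Rightarrow> bool" where
  "right_I_approx C I Y f \<longleftrightarrow> f \<in> I \<and> tcod C f = Y \<and>
    (\<forall>g\<in>I. tcod C g = Y \<longrightarrow> (\<exists>h\<in>hom C (tdom C g) (tdom C f). g = tcomp C f h))"

definition left_D_approx :: "('o, 'm, 'k) tcat \<Rightarrow> 'o set \<Rightarrow> 'o \<Rightarrow> 'm \<Rightarrow> bool" where
  "left_D_approx C D X f \<longleftrightarrow> f \<in> tmor C \<and> tdom C f = X \<and> tcod C f \<in> D \<and>
    (\<forall>W\<in>D. \<forall>g\<in>hom C X W. \<exists>h\<in>hom C (tcod C f) W. g = tcomp C h f)"

definition right_D_approx :: "('o, 'm, 'k) tcat \<Rightarrow> 'o set \<Rightarrow> 'o \<Rightarrow> 'm \<Rightarrow> bool" where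
  "right_D_approx C D Y f \<longleftrightarrow> f \<in> tmor C \<and> tcod C f = Y \<and> tdom C f \<in> D \<and>
    (\<forall>W\<in>D. \<forall>g\<in>hom C W Y. \<exists>h\<in>hom C W (tdom C f). g = tcomp C f h)"

definition D_mutation_pair :: "('o, 'm, 'k) tcat \<Rightarrow> 'o set \<Rightarrow> 'o set \<Rightarrow> 'o set \<Rightarrow> bool" where
  "D_mutation_pair C D \<X> \<Y> \<longleftrightarrow> D \<subseteq> \<X> \<inter> \<Y> \<and>
    (\<forall>X\<in>\<X>. \<exists>f g h. (f, g, h) \<in> ttri C \<and> tdom C f = X \<and> tcod C g \<in> \<Y> \<and>
        left_D_approx C D X f \<and> right_D_approx C D (tcod C g) g) \<and>
    (\<forall>Y\<in>\<Y>. \<exists>u v w. (u, v, w) \<in> ttri C \<and> tcod C v = Y \<and> tdom C u \<in> \<X> \<and>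
        right_D_approx C D Y v \<and> left_D_approx C D (tdom C u) u)"

definition I_mutation_pair :: "('o, 'm, 'k) tcat \<Rightarrow> 'm set \<Rightarrow> 'o set \<Rightarrow> 'o set \<Rightarrow> bool" where
  "I_mutation_pair C I \<X> \<Y> \<longleftrightarrow> ObI C I \<subseteq> \<X> \<inter> \<Y> \<and>
    (\<forall>X\<in>\<X>. \<exists>f g h. (f, g, h) \<in> ttri C \<and> tdom C f = X \<and> tcod C g \<in> \<Y> \<and>
        left_I_approx C I X f \<and> right_I_approx C I (tcod C g) g) \<and>
    (\<forall>Y\<in>\<Y>. \<exists>u v w. (u, v, w) \<in> ttri C \<and> tcod C v = Y \<and> tdom C u \<in> \<X> \<and>
        right_I_approx C I Y v \<and> left_I_approx C I (tdom C u) u)"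

end

theory Submission
  imports Defs
begin

context
  fixes C :: "('o, 'm, 'k::field) tcat"
  assumes T: "triangulated C"
begin

lemma cat: "category C" using T by (simp add: triangulated_def additive_category_def linear_category_def)
lemma lin: "linear_category C" using T by (simp add: triangulated_def additive_category_def)
lemma sh: "shift_ok C" using T by (simp add: triangulated_def)

lemma homD: "f \<in> hom C X Y \<Longrightarrow> f \<in> tmor C \<and> tdom C f = X \<and> tcod C f = Y" by (simp add: hom_def)
lemma hom_objs: "f \<in> hom C X Y \<Longrightarrow> X \<in> tobj C \<and> Y \<in> tobj C"
  using cat by (auto simp: category_def hom_def)
lemma mor_hom: "f \<in> tmor C \<Longrightarrow> f \<in> hom C (tdom C f) (tcod C f)" by (simp add: hom_def)
lemma comp: "f \<in> hom C X Y \<Longrightarrow> g \<in> hom C Y Z \<Longrightarrow> tcomp C g f \<in> hom C X Z"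
  using cat hom_objs unfolding category_def by blast
lemma assoc: "f \<in> hom C W X \<Longrightarrow> g \<in> hom C X Y \<Longrightarrow> h \<in> hom C Y Z \<Longrightarrow>
   tcomp C h (tcomp C g f) = tcomp C (tcomp C h g) f"
  using cat hom_objs unfolding category_def by blast
lemma idh: "X \<in> tobj C \<Longrightarrow> tid C X \<in> hom C X X"
  using cat unfolding category_def by blast
lemma idl: "f \<in> hom C X Y \<Longrightarrow> tcomp C (tid C Y) f = f"
  using cat homD unfolding category_def by metis
lemma idr: "f \<in> hom C X Y \<Longrightarrow> tcomp C f (tid C X) = f"
  using cat homD unfolding category_def by metis

lemma linXY: assumes "X \<in> tobj C" "Y \<in> tobj C" shows
   "tzero C X Y \<in> hom C X Y \<and>
      (\<forall>f\<in>hom C X Y. \<forall>g\<in>hom C X Y. tadd C f g \<in> hom C X Y) \<and>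
      (\<forall>a. \<forall>f\<in>hom C X Y. tsmul C a f \<in> hom C X Y) \<and>
      (\<forall>f\<in>hom C X Y. \<forall>g\<in>hom C X Y. \<forall>h\<in>hom C X Y.
         tadd C (tadd C f g) h = tadd C f (tadd C g h)) \<and>
      (\<forall>f\<in>hom C X Y. \<forall>g\<in>hom C X Y. tadd C f g = tadd C g f) \<and>
      (\<forall>f\<in>hom C X Y. tadd C f (tzero C X Y) = f) \<and>
      (\<forall>f\<in>hom C X Y. \<exists>g\<in>hom C X Y. tadd C f g = tzero C X Y) \<and>
      (\<forall>a. \<forall>f\<in>hom C X Y. \<forall>g\<in>hom C X Y.
         tsmul C a (tadd C f g) = tadd C (tsmul C a f) (tsmul C a g)) \<and>
      (\<forall>a b. \<forall>f\<in>hom C X Y. tsmul C (a + b) f = tadd C (tsmul C a f) (tsmul C b f)) \<and>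
      (\<forall>a b. \<forall>f\<in>hom C X Y. tsmul C a (tsmul C b f) = tsmul C (a * b) f) \<and>
      (\<forall>f\<in>hom C X Y. tsmul C 1 f = f)"
  by (rule bspec[OF bspec[OF lin[unfolded linear_category_def, THEN conjunct2, THEN conjunct1] assms(1)] assms(2)])

lemma linXYZ: assumes "X \<in> tobj C" "Y \<in> tobj C" "Z \<in> tobj C" shows
   "\<forall>f\<in>hom C X Y. \<forall>f'\<in>hom C X Y. \<forall>g\<in>hom C Y Z. \<forall>g'\<in>hom C Y Z. \<forall>a.
        tcomp C (tadd C g g') f = tadd C (tcomp C g f) (tcomp C g' f) \<and>
        tcomp C g (tadd C f f') = tadd C (tcomp C g f) (tcomp C g f') \<and>
        tcomp C (tsmul C a g) f = tsmul C a (tcomp C g f) \<and>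
        tcomp C g (tsmul C a f) = tsmul C a (tcomp C g f)"
  by (rule bspec[OF bspec[OF bspec[OF lin[unfolded linear_category_def, THEN conjunct2, THEN conjunct2] assms(1)] assms(2)] assms(3)])

lemma linH: assumes f: "f \<in> hom C X Y" shows
   "tzero C X Y \<in> hom C X Y \<and>
      (\<forall>f\<in>hom C X Y. \<forall>g\<in>hom C X Y. tadd C f g \<in> hom C X Y) \<and>
      (\<forall>a. \<forall>f\<in>hom C X Y. tsmul C a f \<in> hom C X Y) \<and>
      (\<forall>f\<in>hom C X Y. \<forall>g\<in>hom C X Y. \<forall>h\<in>hom C X Y.
         tadd C (tadd C f g) h = tadd C f (tadd C g h)) \<and>
      (\<forall>f\<in>hom C X Y. \<forall>g\<in>hom C X Y. tadd C f g = tadd C g f) \<and>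
      (\<forall>f\<in>hom C X Y. tadd C f (tzero C X Y) = f) \<and>
      (\<forall>f\<in>hom C X Y. \<exists>g\<in>hom C X Y. tadd C f g = tzero C X Y) \<and>
      (\<forall>a. \<forall>f\<in>hom C X Y. \<forall>g\<in>hom C X Y.
         tsmul C a (tadd C f g) = tadd C (tsmul C a f) (tsmul C a g)) \<and>
      (\<forall>a b. \<forall>f\<in>hom C X Y. tsmul C (a + b) f = tadd C (tsmul C a f) (tsmul C b f)) \<and>
      (\<forall>a b. \<forall>f\<in>hom C X Y. tsmul C a (tsmul C b f) = tsmul C (a * b) f) \<and>
      (\<forall>f\<in>hom C X Y. tsmul C 1 f = f)"
proof -
  from hom_objs[OF f] have "X \<in> tobj C" "Y \<in> tobj C" by auto
  then show ?thesis by (rule linXY)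
qed

lemma zh: "X \<in> tobj C \<Longrightarrow> Y \<in> tobj C \<Longrightarrow> tzero C X Y \<in> hom C X Y"
  using linXY by blast
lemma addh: assumes "f \<in> hom C X Y" "g \<in> hom C X Y" shows "tadd C f g \<in> hom C X Y"
  using linH[OF assms(1), THEN conjunct2, THEN conjunct1] assms by blast
lemma smulh: assumes "f \<in> hom C X Y" shows "tsmul C a f \<in> hom C X Y"
  using linH[OF assms(1), THEN conjunct2, THEN conjunct2, THEN conjunct1] assms by blast
lemma add_assoc: assumes "f \<in> hom C X Y" "g \<in> hom C X Y" "h \<in> hom C X Y" shows "tadd C (tadd C f g) h = tadd C f (tadd C g h)"
  using linH[OF assms(1), THEN conjunct2, THEN conjunct2, THEN conjunct2, THEN conjunct1] assms by blast
lemma add_comm: assumes "f \<in> hom C X Y" "g \<in> hom C X Y" shows "tadd C f g = tadd C g f"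
  using linH[OF assms(1), THEN conjunct2, THEN conjunct2, THEN conjunct2, THEN conjunct2, THEN conjunct1] assms by blast
lemma add_0: assumes "f \<in> hom C X Y" shows "tadd C f (tzero C X Y) = f"
  using linH[OF assms(1), THEN conjunct2, THEN conjunct2, THEN conjunct2, THEN conjunct2, THEN conjunct2, THEN conjunct1] assms by blast
lemma add_inv: assumes "f \<in> hom C X Y" shows "\<exists>g\<in>hom C X Y. tadd C f g = tzero C X Y"
  using linH[OF assms(1), THEN conjunct2, THEN conjunct2, THEN conjunct2, THEN conjunct2, THEN conjunct2, THEN conjunct2, THEN conjunct1] assms by blast
lemma add_smul: assumes "f \<in> hom C X Y" shows "tsmul C (a + b) f = tadd C (tsmul C a f) (tsmul C b f)"
  using linH[OF assms(1), THEN conjunct2, THEN conjunct2, THEN conjunct2, THEN conjunct2, THEN conjunct2, THEN conjunct2, THEN conjunct2, THEN conjunct2, THEN conjunct1] assms by blast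
lemma smul_smul: assumes "f \<in> hom C X Y" shows "tsmul C a (tsmul C b f) = tsmul C (a * b) f"
  using linH[OF assms(1), THEN conjunct2, THEN conjunct2, THEN conjunct2, THEN conjunct2, THEN conjunct2, THEN conjunct2, THEN conjunct2, THEN conjunct2, THEN conjunct2, THEN conjunct1] assms by blast
lemma smul_one: assumes "f \<in> hom C X Y" shows "tsmul C 1 f = f"
  using linH[OF assms(1), THEN conjunct2, THEN conjunct2, THEN conjunct2, THEN conjunct2, THEN conjunct2, THEN conjunct2, THEN conjunct2, THEN conjunct2, THEN conjunct2, THEN conjunct2] assms by blast
lemma comp_addl: assumes "f \<in> hom C X Y" "g \<in> hom C Y Z" "g' \<in> hom C Y Z" shows
  "tcomp C (tadd C g g') f = tadd C (tcomp C g f) (tcomp C g' f)"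
  using linXYZ[of X Y Z] assms hom_objs by blast
lemma comp_addr: assumes "f \<in> hom C X Y" "f' \<in> hom C X Y" "g \<in> hom C Y Z" shows
  "tcomp C g (tadd C f f') = tadd C (tcomp C g f) (tcomp C g f')"
  using linXYZ[of X Y Z] assms hom_objs by blast
lemma comp_smull: assumes "f \<in> hom C X Y" "g \<in> hom C Y Z" shows
  "tcomp C (tsmul C a g) f = tsmul C a (tcomp C g f)"
  using linXYZ[of X Y Z] assms hom_objs by blast
lemma comp_smulr: assumes "f \<in> hom C X Y" "g \<in> hom C Y Z" shows
  "tcomp C g (tsmul C a f) = tsmul C a (tcomp C g f)"
  using linXYZ[of X Y Z] assms hom_objs by blast

lemma cancel_idem: assumes x: "x \<in> hom C X Y" and e: "tadd C x x = x" shows "x = tzero C X Y"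
proof -
  obtain y where y: "y \<in> hom C X Y" "tadd C x y = tzero C X Y" using add_inv[OF x] by blast
  have "x = tadd C x (tadd C x y)" using y add_0 x by simp
  also have "\<dots> = tadd C (tadd C x x) y" using add_assoc x y by metis
  also have "\<dots> = tzero C X Y" using e y by simp
  finally show ?thesis .
qed

lemma comp_zero_r: assumes g: "g \<in> hom C Y Z" and X: "X \<in> tobj C"
  shows "tcomp C g (tzero C X Y) = tzero C X Z"
proof -
  have Y: "Y \<in> tobj C" using hom_objs g by blast
  have z: "tzero C X Y \<in> hom C X Y" using zh X Y by blast
  have "tcomp C g (tzero C X Y) = tcomp C g (tadd C (tzero C X Y) (tzero C X Y))" using add_0 z by simp
  also have "\<dots> = tadd C (tcomp C g (tzero C X Y)) (tcomp C g (tzero C X Y))" using comp_addr z g by blast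
  finally show ?thesis using cancel_idem comp z g by metis
qed

lemma comp_zero_l: assumes f: "f \<in> hom C X Y" and Z: "Z \<in> tobj C"
  shows "tcomp C (tzero C Y Z) f = tzero C X Z"
proof -
  have Y: "Y \<in> tobj C" using hom_objs f by blast
  have z: "tzero C Y Z \<in> hom C Y Z" using zh Z Y by blast
  have "tcomp C (tzero C Y Z) f = tcomp C (tadd C (tzero C Y Z) (tzero C Y Z)) f" using add_0 z by simp
  also have "\<dots> = tadd C (tcomp C (tzero C Y Z) f) (tcomp C (tzero C Y Z) f)" using comp_addl z f by blast
  finally show ?thesis using cancel_idem comp z f by metis
qed

lemma smul_0: assumes f: "f \<in> hom C X Y" shows "tsmul C 0 f = tzero C X Y"
proof -
  have "tsmul C 0 f = tsmul C (0 + 0) f" by simp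
  also have "\<dots> = tadd C (tsmul C 0 f) (tsmul C 0 f)" using add_smul f by blast
  finally show ?thesis using cancel_idem smulh f by metis
qed

lemma smul_zero: assumes X: "X \<in> tobj C" and Y: "Y \<in> tobj C" shows "tsmul C a (tzero C X Y) = tzero C X Y"
proof -
  have z: "tzero C X Y \<in> hom C X Y" using zh X Y by blast
  have "tsmul C a (tzero C X Y) = tsmul C a (tsmul C 0 (tzero C X Y))" using smul_0 z by simp
  also have "\<dots> = tsmul C (a * 0) (tzero C X Y)" using smul_smul z by blast
  also have "\<dots> = tzero C X Y" using smul_0 z by simp
  finally show ?thesis .
qed

lemma negh: "f \<in> hom C X Y \<Longrightarrow> neg C f \<in> hom C X Y" by (simp add: neg_def smulh)

lemma add_neg: assumes f: "f \<in> hom C X Y" shows "tadd C f (neg C f) = tzero C X Y"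
proof -
  have "tadd C f (neg C f) = tadd C (tsmul C 1 f) (tsmul C (-1) f)" using smul_one f by (simp add: neg_def)
  also have "\<dots> = tsmul C (1 + -1) f" using add_smul f by metis
  also have "\<dots> = tzero C X Y" using smul_0 f by simp
  finally show ?thesis .
qed

lemma neg_add: "f \<in> hom C X Y \<Longrightarrow> tadd C (neg C f) f = tzero C X Y"
  using add_neg add_comm negh by metis

lemma neg_neg: "f \<in> hom C X Y \<Longrightarrow> neg C (neg C f) = f"
  using smul_smul smul_one by (simp add: neg_def)

lemma zero_add: "f \<in> hom C X Y \<Longrightarrow> tadd C (tzero C X Y) f = f"
  using add_comm add_0 zh hom_objs by metis

lemma neg_zero: "X \<in> tobj C \<Longrightarrow> Y \<in> tobj C \<Longrightarrow> neg C (tzero C X Y) = tzero C X Y"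
  using smul_zero by (simp add: neg_def)


lemma Tc: "triangulated C" by (rule T)

lemma shO: "X \<in> tobj C \<Longrightarrow> tshO C X \<in> tobj C"
  using sh unfolding shift_ok_def by blast
lemma sh_bij: "X \<in> tobj C \<Longrightarrow> Y \<in> tobj C \<Longrightarrow> bij_betw (tshM C) (hom C X Y) (hom C (tshO C X) (tshO C Y))"
  using sh[unfolded shift_ok_def, THEN conjunct2, THEN conjunct1] by blast
lemma shM: assumes f: "f \<in> hom C X Y" shows "tshM C f \<in> hom C (tshO C X) (tshO C Y)"
  using sh_bij hom_objs[OF f] f bij_betwE by blast
lemma sh_inj: assumes "f \<in> hom C X Y" "g \<in> hom C X Y" "tshM C f = tshM C g" shows "f = g"
  using sh_bij hom_objs[OF assms(1)] assms bij_betw_imp_inj_on inj_onD by metis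
lemma sh_surj: assumes "X \<in> tobj C" "Y \<in> tobj C" "c \<in> hom C (tshO C X) (tshO C Y)"
  shows "\<exists>\<psi>\<in>hom C X Y. tshM C \<psi> = c"
  using sh_bij[OF assms(1,2)] assms(3) by (metis bij_betw_imp_surj_on imageE)
lemma sh_id: "X \<in> tobj C \<Longrightarrow> tshM C (tid C X) = tid C (tshO C X)"
  using sh[unfolded shift_ok_def, THEN conjunct2, THEN conjunct2, THEN conjunct1] by blast
lemma sh_comp: assumes f: "f \<in> hom C X Y" and g: "g \<in> hom C Y Z"
  shows "tshM C (tcomp C g f) = tcomp C (tshM C g) (tshM C f)"
proof -
  have "X \<in> tobj C" "Y \<in> tobj C" "Z \<in> tobj C" using hom_objs f g by auto
  then show ?thesis
    using sh[unfolded shift_ok_def, THEN conjunct2, THEN conjunct2, THEN conjunct2, THEN conjunct1] f g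
    by blast
qed

lemma tri_homs: assumes t: "(f, g, h) \<in> ttri C"
  shows "f \<in> hom C (tdom C f) (tcod C f) \<and> g \<in> hom C (tcod C f) (tcod C g) \<and>
         h \<in> hom C (tcod C g) (tshO C (tdom C f))"
proof -
  have "tri_shape C (f, g, h)" using T[unfolded triangulated_def, THEN conjunct2, THEN conjunct2, THEN conjunct1] t by blast
  then show ?thesis by (auto simp: tri_shape_def hom_def)
qed

lemma tri_shapeI: assumes "(f, g, h) \<in> ttri C" shows "tri_shape C (f, g, h)"
  using T[unfolded triangulated_def, THEN conjunct2, THEN conjunct2, THEN conjunct1] assms by blast

lemma tri_ex: "f \<in> tmor C \<Longrightarrow> \<exists>g h. (f, g, h) \<in> ttri C"
  using T[unfolded triangulated_def, THEN conjunct2, THEN conjunct2, THEN conjunct2, THEN conjunct2, THEN conjunct2, THEN conjunct1] by blast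

lemma idtri: "X \<in> tobj C \<Longrightarrow> is_zero_obj C Z \<Longrightarrow> (tid C X, tzero C X Z, tzero C Z (tshO C X)) \<in> ttri C"
  using T[unfolded triangulated_def, THEN conjunct2, THEN conjunct2, THEN conjunct2, THEN conjunct2, THEN conjunct1] by blast

lemma rot: assumes "(f, g, h) \<in> ttri C" shows "(g, h, neg C (tshM C f)) \<in> ttri C"
  using T[unfolded triangulated_def, THEN conjunct2, THEN conjunct2, THEN conjunct2, THEN conjunct2, THEN conjunct2, THEN conjunct2, THEN conjunct1]
    assms tri_shapeI by blast

lemma tr3: assumes "(f, g, h) \<in> ttri C" "(f', g', h') \<in> ttri C"
  "a \<in> hom C (tdom C f) (tdom C f')" "b \<in> hom C (tcod C f) (tcod C f')"
  "tcomp C b f = tcomp C f' a"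
  shows "\<exists>c\<in>hom C (tcod C g) (tcod C g').
          tcomp C c g = tcomp C g' b \<and> tcomp C (tshM C a) h = tcomp C h' c"
proof -
  have R: "\<forall>f g h f' g' h' a b. (f, g, h) \<in> ttri C \<and> (f', g', h') \<in> ttri C \<and>
       a \<in> hom C (tdom C f) (tdom C f') \<and> b \<in> hom C (tcod C f) (tcod C f') \<and>
       tcomp C b f = tcomp C f' a \<longrightarrow>
       (\<exists>c\<in>hom C (tcod C g) (tcod C g').
          tcomp C c g = tcomp C g' b \<and> tcomp C (tshM C a) h = tcomp C h' c)"
    using T[unfolded triangulated_def, THEN conjunct2, THEN conjunct2, THEN conjunct2, THEN conjunct2, THEN conjunct2, THEN conjunct2, THEN conjunct2, THEN conjunct1] .
  show ?thesis using R[rule_format, of f g h f' g' h' a b] assms by blast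
qed

lemma zobj_ex: "\<exists>Z. is_zero_obj C Z"
  using T unfolding triangulated_def additive_category_def by blast

lemma zobj_tobj: "is_zero_obj C Z \<Longrightarrow> Z \<in> tobj C" by (simp add: is_zero_obj_def)

lemma comp_tri: assumes t: "(f, g, h) \<in> ttri C"
  shows "tcomp C g f = tzero C (tdom C f) (tcod C g)"
proof -
  define X where "X = tdom C f"
  have H: "f \<in> hom C X (tcod C f)" "g \<in> hom C (tcod C f) (tcod C g)" using tri_homs[OF t] X_def by auto
  have X: "X \<in> tobj C" using hom_objs H by blast
  obtain Z where Z: "is_zero_obj C Z" using zobj_ex by blast
  have Zo: "Z \<in> tobj C" using Z zobj_tobj by blast
  have t0: "(tid C X, tzero C X Z, tzero C Z (tshO C X)) \<in> ttri C" using idtri X Z by blast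
  have ih: "tid C X \<in> hom C X X" using idh X by blast
  have zh0: "tzero C X Z \<in> hom C X Z" using zh X Zo by blast
  obtain c where c: "c \<in> hom C (tcod C (tzero C X Z)) (tcod C g)" "tcomp C c (tzero C X Z) = tcomp C g f"
    using tr3[OF t0 t, of "tid C X" f] ih H homD[OF ih] homD[OF H(1)] by force
  have c': "c \<in> hom C Z (tcod C g)" using c(1) homD[OF zh0] by simp
  show ?thesis using c(2) comp_zero_r[OF c' X] X_def by simp
qed

lemma neg_comp_l: "f \<in> hom C X Y \<Longrightarrow> g \<in> hom C Y Z \<Longrightarrow> tcomp C (neg C g) f = neg C (tcomp C g f)"
  by (simp add: neg_def comp_smull)
lemma neg_comp_r: "f \<in> hom C X Y \<Longrightarrow> g \<in> hom C Y Z \<Longrightarrow> tcomp C g (neg C f) = neg C (tcomp C g f)"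
  by (simp add: neg_def comp_smulr)

lemma exact: assumes t: "(f, g, h) \<in> ttri C"
  and phi: "\<phi> \<in> hom C M' (tcod C f)" and z: "tcomp C g \<phi> = tzero C M' (tcod C g)"
  shows "\<exists>\<psi>\<in>hom C M' (tdom C f). \<phi> = tcomp C f \<psi>"
proof -
  define X M Y where "X = tdom C f" and "M = tcod C f" and "Y = tcod C g"
  have H: "f \<in> hom C X M" "g \<in> hom C M Y" "h \<in> hom C Y (tshO C X)"
    using tri_homs[OF t] X_def M_def Y_def by auto
  have X: "X \<in> tobj C" and Mo: "M \<in> tobj C" and Yo: "Y \<in> tobj C" using hom_objs H by auto
  have M': "M' \<in> tobj C" using hom_objs phi by blast
  obtain Z where Z: "is_zero_obj C Z" using zobj_ex by blast
  have Zo: "Z \<in> tobj C" using Z zobj_tobj by blast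
  have t0: "(tzero C M' Z, tzero C Z (tshO C M'), neg C (tshM C (tid C M'))) \<in> ttri C"
    using rot idtri M' Z by blast
  have t1: "(g, h, neg C (tshM C f)) \<in> ttri C" using rot t by blast
  have zh1: "tzero C M' Z \<in> hom C M' Z" using zh M' Zo by blast
  have zh2: "tzero C Z Y \<in> hom C Z Y" using zh Yo Zo by blast
  have zh3: "tzero C Z (tshO C M') \<in> hom C Z (tshO C M')" using zh shO M' Zo by blast
  have sq: "tcomp C (tzero C Z Y) (tzero C M' Z) = tcomp C g \<phi>"
    using comp_zero_l[OF zh1 Yo] z Y_def by simp
  obtain c where c: "c \<in> hom C (tcod C (tzero C Z (tshO C M'))) (tcod C h)"
     "tcomp C (tshM C \<phi>) (neg C (tshM C (tid C M'))) = tcomp C (neg C (tshM C f)) c"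
  proof -
    have a1: "\<phi> \<in> hom C (tdom C (tzero C M' Z)) (tdom C g)" using homD[OF zh1] homD[OF H(2)] phi M_def by simp
    have a2: "tzero C Z Y \<in> hom C (tcod C (tzero C M' Z)) (tcod C g)" using homD[OF zh1] homD[OF H(2)] zh2 by simp
    show ?thesis using tr3[OF t0 t1 a1 a2 sq] that by blast
  qed
  have c': "c \<in> hom C (tshO C M') (tshO C X)" using c(1) homD[OF zh3] homD[OF H(3)] by simp
  have pS: "tshM C \<phi> \<in> hom C (tshO C M') (tshO C M)" using shM phi M_def by simp
  have fS: "tshM C f \<in> hom C (tshO C X) (tshO C M)" using shM H by blast
  have "neg C (tshM C \<phi>) = neg C (tcomp C (tshM C f) c)"
    using c(2) sh_id[OF M'] neg_comp_r[OF idh[OF shO[OF M']] pS] idr[OF pS] neg_comp_l[OF c' fS] by simp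
  then have e: "tshM C \<phi> = tcomp C (tshM C f) c"
    using neg_neg pS comp[OF c' fS] by metis
  obtain \<psi> where psi: "\<psi> \<in> hom C M' X" "tshM C \<psi> = c" using sh_surj[OF M' X c'] by blast
  have "tshM C \<phi> = tshM C (tcomp C f \<psi>)" using e psi sh_comp[OF psi(1) H(1)] by simp
  then have "\<phi> = tcomp C f \<psi>" using sh_inj phi comp[OF psi(1) H(1)] M_def by metis
  then show ?thesis using psi X_def by blast
qed


lemma split_summand:
  assumes a: "a \<in> hom C X W" and b: "b \<in> hom C W X" and ba: "tcomp C b a = tid C X"
  shows "\<exists>Z. biproduct C W X Z"
proof -
  have X: "X \<in> tobj C" and Wo: "W \<in> tobj C" using hom_objs a by auto
  obtain g h where t: "(a, g, h) \<in> ttri C" using tri_ex homD[OF a] by blast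
  define Z where "Z = tcod C g"
  have g: "g \<in> hom C W Z" and h: "h \<in> hom C Z (tshO C X)"
    using tri_homs[OF t] homD[OF a] Z_def by auto
  have Zo: "Z \<in> tobj C" using hom_objs g by blast
  have t1: "(g, h, neg C (tshM C a)) \<in> ttri C" using rot t by blast
  have aS: "tshM C a \<in> hom C (tshO C X) (tshO C W)" using shM a by blast
  have bS: "tshM C b \<in> hom C (tshO C W) (tshO C X)" using shM b by blast
  have "tcomp C (neg C (tshM C a)) h = tzero C Z (tshO C W)"
    using comp_tri[OF rot[OF t1]] homD[OF h] homD[OF negh[OF aS]] by simp
  then have "neg C (tcomp C (tshM C a) h) = tzero C Z (tshO C W)" using neg_comp_l[OF h aS] by simp
  then have ah: "tcomp C (tshM C a) h = tzero C Z (tshO C W)"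
    using neg_neg[OF comp[OF h aS]] neg_zero[OF Zo shO[OF Wo]] by metis
  have "h = tcomp C (tid C (tshO C X)) h" using idl h by simp
  also have "\<dots> = tcomp C (tshM C (tcomp C b a)) h" using ba sh_id X by simp
  also have "\<dots> = tcomp C (tcomp C (tshM C b) (tshM C a)) h" using sh_comp a b by simp
  also have "\<dots> = tcomp C (tshM C b) (tcomp C (tshM C a) h)" using assoc h aS bS by simp
  also have "\<dots> = tzero C Z (tshO C X)" using ah comp_zero_r[OF bS Zo] by simp
  finally have h0: "h = tzero C Z (tshO C X)" .
  have hz: "tcomp C h (tid C Z) = tzero C Z (tcod C h)" using idr h h0 homD[OF h] by simp
  have idZ: "tid C Z \<in> hom C Z (tcod C g)" using Z_def idh[OF Zo] by simp
  obtain s where s: "s \<in> hom C Z W" "tid C Z = tcomp C g s"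
    using exact[OF t1 idZ hz] homD[OF g] by auto
  have ga: "tcomp C g a = tzero C X Z" using comp_tri[OF t] homD[OF a] Z_def by simp
  have sg: "tcomp C s g \<in> hom C W W" using comp s g by blast
  define e where "e = tadd C (tid C W) (neg C (tcomp C s g))"
  have eh: "e \<in> hom C W W" using e_def addh idh[OF Wo] negh sg by blast
  have "tcomp C g e = tadd C (tcomp C g (tid C W)) (tcomp C g (neg C (tcomp C s g)))"
    using comp_addr[OF idh[OF Wo] negh[OF sg] g] e_def by simp
  also have "\<dots> = tadd C g (neg C (tcomp C (tcomp C g s) g))"
    using idr[OF g] neg_comp_r[OF sg g] assoc[OF g s(1) g] by simp
  also have "\<dots> = tzero C W Z" using s(2) idl[OF g] add_neg[OF g] by simp
  finally have ge: "tcomp C g e = tzero C W (tcod C g)" using Z_def by simp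
  obtain r where r: "r \<in> hom C W X" "e = tcomp C a r"
  proof -
    have eh': "e \<in> hom C W (tcod C a)" using eh homD[OF a] by simp
    show ?thesis using exact[OF t eh' ge] homD[OF a] that by auto
  qed
  have "tcomp C a (tcomp C r a) = tcomp C e a" using assoc[OF a r(1) a] r(2) by simp
  also have "\<dots> = tadd C (tcomp C (tid C W) a) (tcomp C (neg C (tcomp C s g)) a)"
    using comp_addl[OF a idh[OF Wo] negh[OF sg]] e_def by simp
  also have "\<dots> = tadd C a (neg C (tcomp C s (tcomp C g a)))"
    using idl[OF a] neg_comp_l[OF a sg] assoc[OF a g s(1)] by simp
  also have "\<dots> = a" using ga comp_zero_r[OF s(1) X] neg_zero[OF X Wo] add_0[OF a] by simp
  finally have ara: "tcomp C a (tcomp C r a) = a" .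
  have ra: "tcomp C r a = tid C X"
  proof -
    have "tcomp C r a = tcomp C (tcomp C b a) (tcomp C r a)" using ba idl comp[OF a r(1)] by simp
    also have "\<dots> = tcomp C b (tcomp C a (tcomp C r a))" using assoc comp[OF a r(1)] a b by simp
    also have "\<dots> = tid C X" using ara ba by simp
    finally show ?thesis .
  qed
  have "tcomp C a (tcomp C r s) = tcomp C e s" using assoc[OF s(1) r(1) a] r(2) by simp
  also have "\<dots> = tadd C (tcomp C (tid C W) s) (tcomp C (neg C (tcomp C s g)) s)"
    using comp_addl[OF s(1) idh[OF Wo] negh[OF sg]] e_def by simp
  also have "\<dots> = tadd C s (neg C (tcomp C s (tcomp C g s)))"
    using idl[OF s(1)] neg_comp_l[OF s(1) sg] assoc[OF s(1) g s(1)] by simp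
  also have "\<dots> = tzero C Z W" using s(2) idr[OF s(1)] add_neg[OF s(1)] by simp
  finally have ars: "tcomp C a (tcomp C r s) = tzero C Z W" .
  have rs: "tcomp C r s = tzero C Z X"
  proof -
    have "tcomp C r s = tcomp C (tcomp C b a) (tcomp C r s)" using ba idl comp[OF s(1) r(1)] by simp
    also have "\<dots> = tcomp C b (tcomp C a (tcomp C r s))" using assoc comp[OF s(1) r(1)] a b by simp
    also have "\<dots> = tzero C Z X" using ars comp_zero_r[OF b Zo] by simp
    finally show ?thesis .
  qed
  have sum: "tadd C (tcomp C a r) (tcomp C s g) = tid C W"
  proof -
    have "tadd C (tcomp C a r) (tcomp C s g) = tadd C (tid C W) (tadd C (neg C (tcomp C s g)) (tcomp C s g))"
      using r(2) e_def add_assoc[OF idh[OF Wo] negh[OF sg] sg] by simp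
    also have "\<dots> = tid C W" using neg_add[OF sg] add_0 idh[OF Wo] by simp
    finally show ?thesis .
  qed
  have "biproduct C W X Z"
    unfolding biproduct_def using Wo X Zo a s(1) r(1) g ra s(2) rs ga sum by metis
  then show ?thesis by blast
qed


lemma fiI: "W \<in> D \<Longrightarrow> a \<in> hom C X W \<Longrightarrow> b \<in> hom C W Y \<Longrightarrow> tcomp C b a \<in> factor_ideal C D"
  unfolding factor_ideal_def using comp homD by (smt (verit) mem_Collect_eq)

lemma fiE: "u \<in> factor_ideal C D \<Longrightarrow> u \<in> tmor C \<and> (\<exists>W a b. W \<in> D \<and> a \<in> hom C (tdom C u) W \<and>
   b \<in> hom C W (tcod C u) \<and> u = tcomp C b a)"
  unfolding factor_ideal_def by blast

lemma fi_hom: "u \<in> factor_ideal C D \<Longrightarrow> u \<in> hom C (tdom C u) (tcod C u)"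
  using fiE mor_hom by blast

lemma fi_obj_cod: assumes "subcat C D" "M \<in> D" "f \<in> hom C X M" shows "f \<in> factor_ideal C D"
proof -
  have "M \<in> tobj C" using assms unfolding subcat_def by blast
  then have "f = tcomp C (tid C M) f" using idl assms by simp
  then show ?thesis using fiI[OF assms(2,3) idh[OF \<open>M \<in> tobj C\<close>]] by simp
qed

lemma fi_obj_dom: assumes "subcat C D" "M \<in> D" "f \<in> hom C M Y" shows "f \<in> factor_ideal C D"
proof -
  have "M \<in> tobj C" using assms unfolding subcat_def by blast
  then have "f = tcomp C f (tid C M)" using idr assms by simp
  then show ?thesis using fiI[OF assms(2) idh[OF \<open>M \<in> tobj C\<close>] assms(3)] by simp
qed

lemma biprod_ex: assumes "X1 \<in> tobj C" "X2 \<in> tobj C" shows "\<exists>S. biproduct C S X1 X2"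
proof -
  have "additive_category C" using T unfolding triangulated_def by blast
  then show ?thesis using assms unfolding additive_category_def by blast
qed

lemma fi_sum: assumes D: "subcat C D" and u: "u \<in> factor_ideal C D" "u \<in> hom C X Y"
  and v: "v \<in> factor_ideal C D" "v \<in> hom C X Y"
  shows "tadd C u v \<in> factor_ideal C D"
proof -
  obtain W1 a1 b1 where 1: "W1 \<in> D" "a1 \<in> hom C X W1" "b1 \<in> hom C W1 Y" "u = tcomp C b1 a1"
    using fiE[OF u(1)] homD[OF u(2)] by auto
  obtain W2 a2 b2 where 2: "W2 \<in> D" "a2 \<in> hom C X W2" "b2 \<in> hom C W2 Y" "v = tcomp C b2 a2"
    using fiE[OF v(1)] homD[OF v(2)] by auto
  have W1: "W1 \<in> tobj C" and W2: "W2 \<in> tobj C" using hom_objs 1 2 by auto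
  obtain S where S: "biproduct C S W1 W2" using biprod_ex W1 W2 by blast
  have SD: "S \<in> D" using D S 1 2 unfolding subcat_def by blast
  obtain i1 i2 p1 p2 where B: "i1 \<in> hom C W1 S" "i2 \<in> hom C W2 S" "p1 \<in> hom C S W1" "p2 \<in> hom C S W2"
      "tcomp C p1 i1 = tid C W1" "tcomp C p2 i2 = tid C W2"
      "tcomp C p1 i2 = tzero C W2 W1" "tcomp C p2 i1 = tzero C W1 W2"
    using S unfolding biproduct_def by blast
  have Yo: "Y \<in> tobj C" using hom_objs u(2) by blast
  have bp1: "tcomp C b1 p1 \<in> hom C S Y" using comp B 1 by blast
  have bp2: "tcomp C b2 p2 \<in> hom C S Y" using comp B 2 by blast
  have ia1: "tcomp C i1 a1 \<in> hom C X S" using comp B 1 by blast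
  have ia2: "tcomp C i2 a2 \<in> hom C X S" using comp B 2 by blast
  define BB where "BB = tadd C (tcomp C b1 p1) (tcomp C b2 p2)"
  define AA where "AA = tadd C (tcomp C i1 a1) (tcomp C i2 a2)"
  have BBh: "BB \<in> hom C S Y" using BB_def addh bp1 bp2 by blast
  have AAh: "AA \<in> hom C X S" using AA_def addh ia1 ia2 by blast
  have Bi1: "tcomp C BB i1 = b1"
  proof -
    have "tcomp C BB i1 = tadd C (tcomp C (tcomp C b1 p1) i1) (tcomp C (tcomp C b2 p2) i1)"
      using comp_addl[OF B(1) bp1 bp2] BB_def by simp
    also have "\<dots> = tadd C (tcomp C b1 (tcomp C p1 i1)) (tcomp C b2 (tcomp C p2 i1))"
      using assoc[OF B(1) B(3) 1(3)] assoc[OF B(1) B(4) 2(3)] by simp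
    also have "\<dots> = b1" using B idr 1 2 comp_zero_r[OF 2(3) W1] add_0 by simp
    finally show ?thesis .
  qed
  have Bi2: "tcomp C BB i2 = b2"
  proof -
    have "tcomp C BB i2 = tadd C (tcomp C (tcomp C b1 p1) i2) (tcomp C (tcomp C b2 p2) i2)"
      using comp_addl[OF B(2) bp1 bp2] BB_def by simp
    also have "\<dots> = tadd C (tcomp C b1 (tcomp C p1 i2)) (tcomp C b2 (tcomp C p2 i2))"
      using assoc[OF B(2) B(3) 1(3)] assoc[OF B(2) B(4) 2(3)] by simp
    also have "\<dots> = b2" using B idr 1 2 comp_zero_r[OF 1(3) W2] zero_add by simp
    finally show ?thesis .
  qed
  have "tcomp C BB AA = tadd C (tcomp C BB (tcomp C i1 a1)) (tcomp C BB (tcomp C i2 a2))"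
    using comp_addr[OF ia1 ia2 BBh] AA_def by simp
  also have "\<dots> = tadd C u v" using assoc[OF 1(2) B(1) BBh] assoc[OF 2(2) B(2) BBh] Bi1 Bi2 1 2 by simp
  finally show ?thesis using fiI[OF SD AAh BBh] by simp
qed

lemma ObI_sub: assumes D: "subcat C D" shows "ObI C (factor_ideal C D) \<subseteq> D"
proof
  fix X assume "X \<in> ObI C (factor_ideal C D)"
  then have X: "X \<in> tobj C" "tid C X \<in> factor_ideal C D" unfolding ObI_def by auto
  have ih: "tid C X \<in> hom C X X" using idh X by blast
  obtain W a b where W: "W \<in> D" "a \<in> hom C X W" "b \<in> hom C W X" "tid C X = tcomp C b a"
    using fiE[OF X(2)] homD[OF ih] by auto
  obtain Z where "biproduct C W X Z" using split_summand W by metis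
  then show "X \<in> D" using D W unfolding subcat_def by blast
qed

lemma D_ObI: assumes D: "subcat C D" shows "D \<subseteq> ObI C (factor_ideal C D)"
proof
  fix X assume XD: "X \<in> D"
  then have X: "X \<in> tobj C" using D unfolding subcat_def by blast
  then show "X \<in> ObI C (factor_ideal C D)" unfolding ObI_def using fi_obj_cod[OF D XD idh[OF X]] by simp
qed

lemma leftD_I: assumes D: "subcat C D" and L: "left_D_approx C D X f"
  shows "left_I_approx C (factor_ideal C D) X f"
proof -
  have f: "f \<in> hom C X (tcod C f)" "tcod C f \<in> D" using L mor_hom unfolding left_D_approx_def by auto
  have "f \<in> factor_ideal C D" using fi_obj_cod[OF D f(2) f(1)] .
  moreover have "\<exists>h\<in>hom C (tcod C f) (tcod C g). g = tcomp C h f"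
    if g: "g \<in> factor_ideal C D" "tdom C g = X" for g
  proof -
    obtain W a b where W: "W \<in> D" "a \<in> hom C X W" "b \<in> hom C W (tcod C g)" "g = tcomp C b a"
      using fiE[OF g(1)] g(2) by auto
    obtain k where k: "k \<in> hom C (tcod C f) W" "a = tcomp C k f" using L W unfolding left_D_approx_def by blast
    have "g = tcomp C (tcomp C b k) f" using W k assoc f by simp
    then show ?thesis using comp k W by blast
  qed
  ultimately show ?thesis unfolding left_I_approx_def using L unfolding left_D_approx_def by blast
qed

lemma rightD_I: assumes D: "subcat C D" and L: "right_D_approx C D Y f"
  shows "right_I_approx C (factor_ideal C D) Y f"
proof -
  have f: "f \<in> hom C (tdom C f) Y" "tdom C f \<in> D" using L mor_hom unfolding right_D_approx_def by auto
  have "f \<in> factor_ideal C D" using fi_obj_dom[OF D f(2) f(1)] .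
  moreover have "\<exists>h\<in>hom C (tdom C g) (tdom C f). g = tcomp C f h"
    if g: "g \<in> factor_ideal C D" "tcod C g = Y" for g
  proof -
    obtain W a b where W: "W \<in> D" "a \<in> hom C (tdom C g) W" "b \<in> hom C W Y" "g = tcomp C b a"
      using fiE[OF g(1)] g(2) by auto
    obtain k where k: "k \<in> hom C W (tdom C f)" "b = tcomp C f k" using L W unfolding right_D_approx_def by blast
    have "g = tcomp C f (tcomp C k a)" using W k assoc f by simp
    then show ?thesis using comp k W by blast
  qed
  ultimately show ?thesis unfolding right_I_approx_def using L unfolding right_D_approx_def by blast
qed

lemma leftI_D: assumes D: "subcat C D" and L: "left_I_approx C (factor_ideal C D) X f" and M: "tcod C f \<in> D"
  shows "left_D_approx C D X f"
proof -
  have f: "f \<in> tmor C" "tdom C f = X" using L fiE unfolding left_I_approx_def by auto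
  have "\<exists>h\<in>hom C (tcod C f) W. g = tcomp C h f" if W: "W \<in> D" "g \<in> hom C X W" for W g
  proof -
    have "g \<in> factor_ideal C D" using fi_obj_cod[OF D W] .
    then show ?thesis using L W(2) homD[OF W(2)] unfolding left_I_approx_def by metis
  qed
  then show ?thesis unfolding left_D_approx_def using f M by blast
qed

lemma rightI_D: assumes D: "subcat C D" and L: "right_I_approx C (factor_ideal C D) Y f" and M: "tdom C f \<in> D"
  shows "right_D_approx C D Y f"
proof -
  have f: "f \<in> tmor C" "tcod C f = Y" using L fiE unfolding right_I_approx_def by auto
  have "\<exists>h\<in>hom C W (tdom C f). g = tcomp C f h" if W: "W \<in> D" "g \<in> hom C W Y" for W g
  proof -
    have "g \<in> factor_ideal C D" using fi_obj_dom[OF D W] .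
    then show ?thesis using L W(2) homD[OF W(2)] unfolding right_I_approx_def by metis
  qed
  then show ?thesis unfolding right_D_approx_def using f M by blast
qed


lemma mid_in_D: assumes D: "subcat C D" and t: "(f, g, h) \<in> ttri C"
  and L: "left_I_approx C (factor_ideal C D) (tdom C f) f"
  and R: "right_I_approx C (factor_ideal C D) (tcod C g) g"
  shows "tcod C f \<in> D"
proof -
  define X M Y where "X = tdom C f" and "M = tcod C f" and "Y = tcod C g"
  have H: "f \<in> hom C X M" "g \<in> hom C M Y"
    using tri_homs[OF t] X_def M_def Y_def by auto
  have Mo: "M \<in> tobj C" using hom_objs H by blast
  have fI: "f \<in> factor_ideal C D" and gI: "g \<in> factor_ideal C D"
    using L R unfolding left_I_approx_def right_I_approx_def by auto
  obtain W a b where W: "W \<in> D" "a \<in> hom C X W" "b \<in> hom C W M" "f = tcomp C b a"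
    using fiE[OF fI] homD[OF H(1)] by auto
  obtain W' c d where W': "W' \<in> D" "c \<in> hom C M W'" "d \<in> hom C W' Y" "g = tcomp C d c"
    using fiE[OF gI] homD[OF H(2)] by auto
  have dI: "d \<in> factor_ideal C D" using fi_obj_dom[OF D W'(1,3)] .
  obtain t' where tt: "t' \<in> hom C W' M" "d = tcomp C g t'"
  proof -
    have "\<exists>k\<in>hom C (tdom C d) (tdom C g). d = tcomp C g k"
      using R dI homD[OF W'(3)] Y_def unfolding right_I_approx_def by blast
    then show ?thesis using that homD[OF W'(3)] homD[OF H(2)] by auto
  qed
  have tc: "tcomp C t' c \<in> hom C M M" using comp tt W' by blast
  define \<phi> where "\<phi> = tadd C (tid C M) (neg C (tcomp C t' c))"
  have ph: "\<phi> \<in> hom C M M" using \<phi>_def addh idh[OF Mo] negh tc by blast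
  have "tcomp C g \<phi> = tadd C (tcomp C g (tid C M)) (tcomp C g (neg C (tcomp C t' c)))"
    using comp_addr[OF idh[OF Mo] negh[OF tc] H(2)] \<phi>_def by simp
  also have "\<dots> = tadd C g (neg C (tcomp C (tcomp C g t') c))"
    using idr[OF H(2)] neg_comp_r[OF tc H(2)] assoc[OF W'(2) tt(1) H(2)] by simp
  also have "\<dots> = tzero C M Y" using tt(2) W'(4) add_neg[OF H(2)] by simp
  finally have gz: "tcomp C g \<phi> = tzero C M (tcod C g)" using Y_def by simp
  have ph': "\<phi> \<in> hom C M (tcod C f)" using ph M_def by simp
  obtain \<psi> where psi: "\<psi> \<in> hom C M X" "\<phi> = tcomp C f \<psi>"
    using exact[OF t ph' gz] X_def by auto
  have fpsi: "tcomp C f \<psi> \<in> hom C M M" using comp psi H by blast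
  have idsum: "tid C M = tadd C (tcomp C t' c) (tcomp C f \<psi>)"
  proof -
    have "tadd C (tcomp C t' c) (tcomp C f \<psi>) = tadd C (tcomp C t' c) (tadd C (tid C M) (neg C (tcomp C t' c)))"
      using psi \<phi>_def by simp
    also have "\<dots> = tadd C (tadd C (tcomp C t' c) (tid C M)) (neg C (tcomp C t' c))"
      using add_assoc[OF tc idh[OF Mo] negh[OF tc]] by simp
    also have "\<dots> = tadd C (tadd C (tid C M) (tcomp C t' c)) (neg C (tcomp C t' c))"
      using add_comm[OF tc idh[OF Mo]] by simp
    also have "\<dots> = tadd C (tid C M) (tadd C (tcomp C t' c) (neg C (tcomp C t' c)))"
      using add_assoc[OF idh[OF Mo] tc negh[OF tc]] by simp
    also have "\<dots> = tid C M" using add_neg[OF tc] add_0[OF idh[OF Mo]] by simp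
    finally show ?thesis by simp
  qed
  have I1: "tcomp C t' c \<in> factor_ideal C D" using fiI[OF W'(1,2) tt(1)] .
  have "tcomp C f \<psi> = tcomp C b (tcomp C a \<psi>)" using W(4) assoc[OF psi(1) W(2) W(3)] by simp
  then have I2: "tcomp C f \<psi> \<in> factor_ideal C D" using fiI[OF W(1) comp[OF psi(1) W(2)] W(3)] by simp
  have "tid C M \<in> factor_ideal C D" using fi_sum[OF D I1 tc I2 fpsi] idsum by simp
  then have "M \<in> ObI C (factor_ideal C D)" using Mo unfolding ObI_def by simp
  then show ?thesis using ObI_sub[OF D] M_def by blast
qed

end

theorem proposition3p2:
  fixes C :: "('o, 'm, 'k::field) tcat"
    and D \<X> \<Y> :: "'o set"
  assumes "alg_closed TYPE('k)"
    and "triangulated C"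
    and "hom_finite C"
    and "krull_schmidt C"
    and "subcat C D" and "subcat C \<X>" and "subcat C \<Y>"
  shows "D_mutation_pair C D \<X> \<Y> \<longleftrightarrow> I_mutation_pair C (factor_ideal C D) \<X> \<Y>"
proof
  note T = assms(2) and D = assms(5)
  have Ob: "ObI C (factor_ideal C D) = D" using ObI_sub[OF T D] D_ObI[OF T D] by blast
  {
    assume M: "D_mutation_pair C D \<X> \<Y>"
    show "I_mutation_pair C (factor_ideal C D) \<X> \<Y>"
      unfolding I_mutation_pair_def Ob
    proof (intro conjI ballI)
      show "D \<subseteq> \<X> \<inter> \<Y>" using M unfolding D_mutation_pair_def by blast
    next
      fix X assume "X \<in> \<X>"
      then obtain f g h where "(f, g, h) \<in> ttri C" "tdom C f = X" "tcod C g \<in> \<Y>"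
        "left_D_approx C D X f" "right_D_approx C D (tcod C g) g"
        using M unfolding D_mutation_pair_def by blast
      then show "\<exists>f g h. (f, g, h) \<in> ttri C \<and> tdom C f = X \<and> tcod C g \<in> \<Y> \<and>
        left_I_approx C (factor_ideal C D) X f \<and> right_I_approx C (factor_ideal C D) (tcod C g) g"
        using leftD_I[OF T D] rightD_I[OF T D] by blast
    next
      fix Y assume "Y \<in> \<Y>"
      then obtain u v w where "(u, v, w) \<in> ttri C" "tcod C v = Y" "tdom C u \<in> \<X>"
        "right_D_approx C D Y v" "left_D_approx C D (tdom C u) u"
        using M unfolding D_mutation_pair_def by blast
      then show "\<exists>u v w. (u, v, w) \<in> ttri C \<and> tcod C v = Y \<and> tdom C u \<in> \<X> \<and>
        right_I_approx C (factor_ideal C D) Y v \<and> left_I_approx C (factor_ideal C D) (tdom C u) u"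
        using leftD_I[OF T D] rightD_I[OF T D] by blast
    qed
  }
  {
    assume M: "I_mutation_pair C (factor_ideal C D) \<X> \<Y>"
    show "D_mutation_pair C D \<X> \<Y>"
      unfolding D_mutation_pair_def
    proof (intro conjI ballI)
      show "D \<subseteq> \<X> \<inter> \<Y>" using M Ob unfolding I_mutation_pair_def by blast
    next
      fix X assume "X \<in> \<X>"
      then obtain f g h where fgh: "(f, g, h) \<in> ttri C" "tdom C f = X" "tcod C g \<in> \<Y>"
        "left_I_approx C (factor_ideal C D) X f" "right_I_approx C (factor_ideal C D) (tcod C g) g"
        using M unfolding I_mutation_pair_def by blast
      have mid: "tcod C f \<in> D" using mid_in_D[OF T D fgh(1)] fgh by simp
      have "tdom C g \<in> D" using mid tri_homs[OF T fgh(1)] homD[OF T] by metis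
      then show "\<exists>f g h. (f, g, h) \<in> ttri C \<and> tdom C f = X \<and> tcod C g \<in> \<Y> \<and>
        left_D_approx C D X f \<and> right_D_approx C D (tcod C g) g"
        using fgh mid leftI_D[OF T D] rightI_D[OF T D] by blast
    next
      fix Y assume "Y \<in> \<Y>"
      then obtain u v w where uvw: "(u, v, w) \<in> ttri C" "tcod C v = Y" "tdom C u \<in> \<X>"
        "right_I_approx C (factor_ideal C D) Y v" "left_I_approx C (factor_ideal C D) (tdom C u) u"
        using M unfolding I_mutation_pair_def by blast
      have mid: "tcod C u \<in> D" using mid_in_D[OF T D uvw(1)] uvw by simp
      have "tdom C v \<in> D" using mid tri_homs[OF T uvw(1)] homD[OF T] by metis
      then show "\<exists>u v w. (u, v, w) \<in> ttri C \<and> tcod C v = Y \<and> tdom C u \<in> \<X> \<and>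
        right_D_approx C D Y v \<and> left_D_approx C D (tdom C u) u"
        using uvw mid leftI_D[OF T D] rightI_D[OF T D] by blast
    qed
  }
qed

end
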